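(* Let $L,R\in\mathrm{SL}_2(\mathbb{N}_0)$ be such that $(L,R)$ is a left-right pair. Then every tree (connected component) of the graph $\mathcal{F}(L,R)$ is rooted, i.e. it contains a vertex of indegree $0$. Equivalently, no vertex $z\in\mathcal{D}_0$ has infinitely many ancestors in $\mathcal{F}(L,R)$.
   Context: $\mathbb{N}_0=\{0,1,2,\dots\}$ and $\mathrm{SL}_2(\mathbb{N}_0)$ is the set of $2\times 2$ matrices $\begin{pmatrix} a & b\\ c & d\end{pmatrix}$ with $a,b,c,d\in\mathbb{N}_0$ and $ad-bc=1$; such a matrix $T$ acts on $\overline{\mathbb{C}}=\mathbb{C}\cup\{\infty\}$ by $T(z)=\frac{az+b}{cz+d}$. Let $\mathcal{D}_0=\{x+iy : x>0,\ y>0\}$; every $T\in\mathrm{SL}_2(\mathbb{N}_0)$ satisfies $T(\mathcal{D}_0)\subseteq\mathcal{D}_0$. A pair $(L,R)$ in $\mathrm{SL}_2(\mathbb{N}_0)$ is a left-right pair if $L(\mathcal{D}_0)\cap R(\mathcal{D}_0)=\emptyset$. The directed graph $\mathcal{F}(L,R)$ has vertex set $\mathcal{D}_0$ and edge set $\{(z,L(z)) : z\in\mathcal{D}_0\}\cup\{(z,R(z)) : z\in\mathcal{D}_0\}$. When $(L,R)$ is a left-right pair, it is known that $\mathcal{F}(L,R)$ is a disjoint union of infinite binary trees, each of which is either rooted (every vertex has outdegree 2, exactly one vertex has indegree 0 and all others have indegree 1) or rootless (every vertex has outdegree 2 and indegree 1). A vertex $w$ is an ancestor of $z$ if there is a directed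 path from $w$ to $z$ in $\mathcal{F}(L,R)$. *)

theory Defs
  imports Complex_Main
begin

text \<open>A 2x2 matrix (a b; c d) with entries in N_0 is represented as the tuple (a,b,c,d).\<close>
type_synonym mat2 = "nat \<times> nat \<times> nat \<times> nat"

definition SL2N0 :: "mat2 set" where
  "SL2N0 = {(a,b,c,d). int a * int d - int b * int c = 1}"

definition moeb :: "mat2 \<Rightarrow> complex \<Rightarrow> complex" where
  "moeb T z = (case T of (a,b,c,d) \<Rightarrow> (of_nat a * z + of_nat b) / (of_nat c * z + of_nat d))"

definition D0 :: "complex set" where
  "D0 = {z. Re z > 0 \<and> Im z > 0}"

definition left_right_pair :: "mat2 \<Rightarrow> mat2 \<Rightarrow> bool" where
  "left_right_pair L R \<longleftrightarrow> moeb L ` D0 \<inter> moeb R ` D0 = {}"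

definition Fedges :: "mat2 \<Rightarrow> mat2 \<Rightarrow> (complex \<times> complex) set" where
  "Fedges L R = {(z, moeb L z) | z. z \<in> D0} \<union> {(z, moeb R z) | z. z \<in> D0}"

definition ancestors :: "mat2 \<Rightarrow> mat2 \<Rightarrow> complex \<Rightarrow> complex set" where
  "ancestors L R z = {w. (w, z) \<in> (Fedges L R)\<^sup>+}"

definition indegree_zero :: "mat2 \<Rightarrow> mat2 \<Rightarrow> complex \<Rightarrow> bool" where
  "indegree_zero L R r \<longleftrightarrow> (\<nexists>u. (u, r) \<in> Fedges L R)"

definition same_component :: "mat2 \<Rightarrow> mat2 \<Rightarrow> complex \<Rightarrow> complex \<Rightarrow> bool" where
  "same_component L R u v \<longleftrightarrow> (u, v) \<in> (Fedges L R \<union> (Fedges L R)\<inverse>)\<^sup>*"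

end

theory Submission imports Defs begin

lemma det_real:
  assumes "(a,b,c,d) \<in> SL2N0"
  shows "real a * real d - real b * real c = 1"
proof -
  have "int a * int d - int b * int c = 1" using assms unfolding SL2N0_def by simp
  then have "real_of_int (int a * int d - int b * int c) = 1" by simp
  then show ?thesis by simp
qed

lemma det_nat:
  assumes "(a,b,c,d) \<in> SL2N0"
  shows "a * d = b * c + 1"
proof -
  have "int a * int d - int b * int c = 1" using assms unfolding SL2N0_def by simp
  then have "int (a * d) = int (b * c + 1)" by simp
  then show ?thesis by (simp only: of_nat_eq_iff)
qed

lemma d_pos: assumes "(a,b,c,d) \<in> SL2N0" shows "d \<ge> 1" "a \<ge> 1"
proof -
  have e: "a * d = b * c + 1" by (rule det_nat[OF assms])
  then have "a * d \<noteq> 0" by simp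
  then have "a \<noteq> 0" "d \<noteq> 0" by auto
  then show "d \<ge> 1" "a \<ge> 1" by auto
qed

lemma moeb_explicit:
  assumes T: "(a,b,c,d) \<in> SL2N0" and s: "s > 0" and t: "t>0"
  shows "moeb (a,b,c,d) (Complex s t) =
    Complex ((real a*real c*(s\<^sup>2+t\<^sup>2) + (real a*real d+real b*real c)*s + real b*real d)/((real c*s+real d)\<^sup>2+(real c*t)\<^sup>2))
            (t/((real c*s+real d)\<^sup>2+(real c*t)\<^sup>2))"
proof -
  have det: "real a * real d - real b * real c = 1" by (rule det_real[OF T])
  have d1: "real d \<ge> 1" using d_pos[OF T] by simp
  have den: "(c*s+d)\<^sup>2+(c*t)\<^sup>2 > (0::real)"
    using d1 s by (smt (verit) mult_nonneg_nonneg of_nat_0_le_iff zero_le_power2 zero_less_power2)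
  have e: "moeb (a,b,c,d) (Complex s t) = Complex (a*s+b) (a*t) / Complex (c*s+d) (c*t)"
  proof -
    have 1: "complex_of_nat a * Complex s t + complex_of_nat b = Complex (a*s+b) (a*t)"
      by (simp add: complex_eq_iff)
    have 2: "complex_of_nat c * Complex s t + complex_of_nat d = Complex (c*s+d) (c*t)"
      by (simp add: complex_eq_iff)
    show ?thesis unfolding moeb_def by (simp add: 1 2)
  qed
  have re: "Re (Complex (a*s+b) (a*t) / Complex (c*s+d) (c*t)) =
     (a*c*(s\<^sup>2+t\<^sup>2) + (a*d+b*c)*s + b*d)/((c*s+d)\<^sup>2+(c*t)\<^sup>2)"
    unfolding Re_divide by (simp add: power2_eq_square algebra_simps)
  have "a*t*(c*s+d) - (a*s+b)*(c*t) = t * (real a * real d - real b * real c)"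
    by (simp add: algebra_simps)
  then have im0: "a*t*(c*s+d) - (a*s+b)*(c*t) = t" using det by simp
  have im: "Im (Complex (a*s+b) (a*t) / Complex (c*s+d) (c*t)) =
     t/((c*s+d)\<^sup>2+(c*t)\<^sup>2)"
    unfolding Im_divide using im0 by simp
  show ?thesis unfolding e by (rule complex_eqI) (simp_all only: re im complex.sel of_nat_mult of_nat_add)
qed


lemma det_complex:
  assumes "(a,b,c,d) \<in> SL2N0"
  shows "complex_of_nat a * of_nat d - of_nat b * of_nat c = 1"
proof -
  have "real a * real d - real b * real c = 1" by (rule det_real[OF assms])
  then have "complex_of_real (real a * real d - real b * real c) = 1" by simp
  then show ?thesis by simp
qed

lemma D0_Complex: "w \<in> D0 \<Longrightarrow> w = Complex (Re w) (Im w) \<and> Re w > 0 \<and> Im w > 0"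
  unfolding D0_def by simp

lemma den_nz:
  assumes "(a,b,c,d) \<in> SL2N0" "w \<in> D0"
  shows "of_nat c * w + of_nat d \<noteq> 0"
proof -
  have "Re (of_nat c * w + of_nat d) > 0"
  proof -
    have "Re w > 0" using assms(2) unfolding D0_def by simp
    then have "real c * Re w \<ge> 0" by simp
    moreover have "real d \<ge> 1" using d_pos[OF assms(1)] by simp
    ultimately show ?thesis by simp
  qed
  then show ?thesis by (metis zero_complex.simps(1) less_irrefl)
qed

lemma moeb_D0:
  assumes T: "T \<in> SL2N0" and w: "w \<in> D0"
  shows "moeb T w \<in> D0"
proof -
  obtain a b c d where Td: "T = (a,b,c,d)" by (cases T) auto
  obtain s t where wst: "w = Complex s t" "s > 0" "t > 0" using D0_Complex[OF w] by blast
  have d1: "real d \<ge> 1" "real a \<ge> 1" using d_pos[OF T[unfolded Td]] by auto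
  have den: "(real c*s+real d)\<^sup>2+(real c*t)\<^sup>2 > (0::real)"
    using d1 wst by (smt (verit) mult_nonneg_nonneg of_nat_0_le_iff zero_le_power2 zero_less_power2)
  have num: "real a*real c*(s\<^sup>2+t\<^sup>2) + (real a*real d+real b*real c)*s + real b*real d > 0"
  proof -
    have "real a*real c*(s\<^sup>2+t\<^sup>2) \<ge> 0" by simp
    moreover have "(real a*real d+real b*real c)*s > 0" using d1 wst
      by (simp add: add_pos_nonneg)
    moreover have "real b * real d \<ge> 0" by simp
    ultimately show ?thesis by linarith
  qed
  show ?thesis unfolding Td wst(1) moeb_explicit[OF T[unfolded Td] wst(2,3)] D0_def
    using den num wst by simp
qed

lemma moeb_step:
  assumes T: "T \<in> SL2N0" and w: "w \<in> D0" and nid: "T \<noteq> (1,0,0,1)"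
  shows "Im (moeb T w) < Im w \<or> (Im (moeb T w) = Im w \<and> Re w < Re (moeb T w))"
proof -
  obtain a b c d where Td: "T = (a,b,c,d)" by (cases T) auto
  obtain s t where wst: "w = Complex s t" "s > 0" "t > 0" using D0_Complex[OF w] by blast
  note ex = moeb_explicit[OF T[unfolded Td] wst(2,3)]
  have dn: "a * d = b * c + 1" by (rule det_nat[OF T[unfolded Td]])
  have d1: "real d \<ge> 1" using d_pos[OF T[unfolded Td]] by auto
  show ?thesis
  proof (cases "c = 0")
    case True
    then have "a = 1" "d = 1" using dn by auto
    with True nid Td have "b \<ge> 1" by auto
    then show ?thesis unfolding Td wst(1) ex using True \<open>a = 1\<close> \<open>d = 1\<close> wst by simp
  next
    case False
    then have "real c \<ge> 1" by simp
    then have "real c * s + real d > 1" using d1 wst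
      by (smt (verit) mult_pos_pos)
    then have "(real c * s + real d)\<^sup>2 > 1"
      by (smt (verit) one_less_power pos2)
    then have "(real c*s+real d)\<^sup>2+(real c*t)\<^sup>2 > 1" by (smt (verit) zero_le_power2)
    then have "t / ((real c*s+real d)\<^sup>2+(real c*t)\<^sup>2) < t" using wst(3)
      by (simp add: divide_less_eq)
    then show ?thesis unfolding Td wst(1) ex by simp
  qed
qed

definition mmul :: "mat2 \<Rightarrow> mat2 \<Rightarrow> mat2" where
  "mmul A B = (case A of (a,b,c,d) \<Rightarrow> case B of (a',b',c',d') \<Rightarrow>
     (a*a'+b*c', a*b'+b*d', c*a'+d*c', c*b'+d*d'))"

lemma mmul_SL:
  assumes "A \<in> SL2N0" "B \<in> SL2N0" shows "mmul A B \<in> SL2N0"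
proof -
  obtain a b c d where A: "A = (a,b,c,d)" by (cases A) auto
  obtain a' b' c' d' where B: "B = (a',b',c',d')" by (cases B) auto
  have 1: "int a * int d - int b * int c = 1" using assms(1) A unfolding SL2N0_def by simp
  have 2: "int a' * int d' - int b' * int c' = 1" using assms(2) B unfolding SL2N0_def by simp
  have "(int a*int a'+int b*int c')*(int c*int b'+int d*int d') - (int a*int b'+int b*int d')*(int c*int a'+int d*int c')
      = (int a * int d - int b * int c) * (int a' * int d' - int b' * int c')"
    by (simp add: algebra_simps)
  then show ?thesis using 1 2 unfolding A B mmul_def SL2N0_def by simp
qed

lemma moeb_mmul:
  assumes A: "A \<in> SL2N0" and B: "B \<in> SL2N0" and w: "w \<in> D0"
  shows "moeb A (moeb B w) = moeb (mmul A B) w"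
proof -
  obtain a b c d where Ad: "A = (a,b,c,d)" by (cases A) auto
  obtain a' b' c' d' where Bd: "B = (a',b',c',d')" by (cases B) auto
  define N where "N = of_nat a' * w + of_nat b'"
  define D where "D = of_nat c' * w + of_nat d'"
  have Dnz: "D \<noteq> 0" unfolding D_def using den_nz[OF B[unfolded Bd] w] .
  have "moeb A (moeb B w) = (of_nat a * (N/D) + of_nat b) / (of_nat c * (N/D) + of_nat d)"
    unfolding Ad Bd moeb_def N_def D_def by simp
  also have "\<dots> = ((of_nat a * N + of_nat b * D)/D) / ((of_nat c * N + of_nat d * D)/D)"
    using Dnz by (simp add: field_simps)
  also have "\<dots> = (of_nat a * N + of_nat b * D) / (of_nat c * N + of_nat d * D)"
    using Dnz by (simp add: divide_divide_eq_left divide_divide_eq_right)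
  also have "\<dots> = moeb (mmul A B) w"
    unfolding Ad Bd mmul_def moeb_def N_def D_def by (simp add: algebra_simps)
  finally show ?thesis .
qed

lemma moeb_inj:
  assumes T: "T \<in> SL2N0" and w1: "w1 \<in> D0" and w2: "w2 \<in> D0" and eq: "moeb T w1 = moeb T w2"
  shows "w1 = w2"
proof -
  obtain a b c d where Td: "T = (a,b,c,d)" by (cases T) auto
  note n1 = den_nz[OF T[unfolded Td] w1] and n2 = den_nz[OF T[unfolded Td] w2]
  have "(of_nat a * w1 + of_nat b) * (of_nat c * w2 + of_nat d) = (of_nat a * w2 + of_nat b) * (of_nat c * w1 + of_nat d)"
    using eq n1 n2 unfolding Td moeb_def by (simp add: field_simps)
  then have "(complex_of_nat a * of_nat d - of_nat b * of_nat c) * (w1 - w2) = 0"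
    by (simp add: algebra_simps)
  then show ?thesis using det_complex[OF T[unfolded Td]] by simp
qed


lemma key_ineq:
  assumes T: "(a,b,c,d) \<in> SL2N0" and w: "w \<in> D0" and z: "z = moeb (a,b,c,d) w"
  shows "(real d * Re z - real b) * (real a - real c * Re z) > real c * real d * (Im z)\<^sup>2"
proof -
  define D where "D = of_nat c * w + of_nat d"
  have Dnz: "D \<noteq> 0" unfolding D_def using den_nz[OF T w] .
  have det: "complex_of_nat a * of_nat d - of_nat b * of_nat c = 1" by (rule det_complex[OF T])
  have zD: "z = (of_nat a * w + of_nat b) / D" unfolding z D_def moeb_def by simp
  define p where "p = of_nat d * z - of_nat b"
  define q where "q = of_nat a - of_nat c * z"
  have p: "p = w / D"
  proof -
    have "p = ((complex_of_nat a * of_nat d - of_nat b * of_nat c) * w) / D"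
      unfolding p_def zD D_def using Dnz[unfolded D_def] by (simp add: field_simps)
    then show ?thesis using det by simp
  qed
  have q: "q = 1 / D"
  proof -
    have "q = (complex_of_nat a * of_nat d - of_nat b * of_nat c) / D"
      unfolding q_def zD D_def using Dnz[unfolded D_def] by (simp add: field_simps)
    then show ?thesis using det by simp
  qed
  have "p * cnj q = w / (D * cnj D)" unfolding p q by (simp add: field_simps)
  also have "\<dots> = w / complex_of_real ((cmod D)\<^sup>2)" by (simp only: complex_norm_square)
  finally have pq: "Re (p * cnj q) = Re w / (cmod D)\<^sup>2"
    by (simp add: Re_divide_of_real)
  have "Re w > 0" using w unfolding D0_def by simp
  moreover have "(cmod D)\<^sup>2 > 0" using Dnz by simp
  ultimately have "Re (p * cnj q) > 0" unfolding pq by simp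
  moreover have "Re (p * cnj q) = (real d * Re z - real b) * (real a - real c * Re z) - real c * real d * (Im z)\<^sup>2"
    unfolding p_def q_def by (simp add: power2_eq_square algebra_simps)
  ultimately show ?thesis by simp
qed

lemma bounds:
  fixes x y :: real
  assumes dn: "a * d = b * c + 1" and y: "y > 0" and x: "x > 0"
    and K: "(real d * x - real b) * (real a - real c * x) > real c * real d * y\<^sup>2"
  shows "real a \<le> (1 + 1/y) * (1 + x) \<and> real b \<le> (1 + 1/y) * (1 + x)
       \<and> real c \<le> (1 + 1/y) * (1 + x) \<and> real d \<le> (1 + 1/y) * (1 + x)"
proof -
  define P where "P = real d * x - real b"
  define Q where "Q = real a - real c * x"
  have "real (a * d) = real (b * c + 1)" using dn by (simp only:)
  then have detr: "real a * real d = real b * real c + 1" by simp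
  have lin: "real c * P + real d * Q = 1" unfolding P_def Q_def using detr by (simp add: algebra_simps)
  have d1: "d \<ge> 1" using dn by (cases d) auto
  have d1': "real d \<ge> 1" using d1 by simp
  have PQ: "P * Q > real c * real d * y\<^sup>2" using K unfolding P_def Q_def .
  have "real c * real d * y\<^sup>2 \<ge> 0" by simp
  then have PQ0: "P * Q > 0" using PQ by linarith
  then have cases: "(0 < P \<and> 0 < Q) \<or> (P < 0 \<and> Q < 0)" by (simp add: zero_less_mult_iff)
  have PQpos: "P > 0 \<and> Q > 0"
  proof (rule ccontr)
    assume "\<not> (P > 0 \<and> Q > 0)"
    then have n: "P < 0" "Q < 0" using cases by auto
    have "real c * P \<le> 0" using n(1) by (simp add: mult_nonneg_nonpos)
    moreover have "real d * Q < 0" using n(2) d1' by (simp add: mult_pos_neg)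
    ultimately show False using lin by linarith
  qed
  have cP0: "real c * P \<ge> 0" using PQpos by simp
  have dQ0: "real d * Q \<ge> 0" using PQpos by simp
  have dQ: "real d * Q \<le> 1" using lin cP0 by linarith
  have cP: "real c * P \<le> 1" using lin dQ0 by linarith
  have cd: "real c \<le> 1/y \<and> real d \<le> 1 + 1/y"
  proof (cases "c = 0")
    case True
    then have "d = 1" using dn by simp
    then show ?thesis using True y by simp
  next
    case False
    have "(real c * real d) * (real c * real d * y\<^sup>2) \<le> (real c * real d) * (P * Q)"
      using PQ by (intro mult_left_mono) auto
    also have "\<dots> = (real c * P) * (real d * Q)" by (simp add: algebra_simps)
    also have "\<dots> \<le> 1" by (rule mult_le_one[OF cP dQ0 dQ])
    finally have "(real c * real d * y)\<^sup>2 \<le> 1" by (simp add: power2_eq_square algebra_simps)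
    then have "\<bar>real c * real d * y\<bar> \<le> 1" by (simp only: abs_square_le_1)
    then have cdy: "real c * real d * y \<le> 1" by simp
    have c1: "real c \<ge> 1" using False by simp
    have "real c * y \<le> real c * real d * y"
      using mult_right_mono[OF mult_left_mono[OF d1', of "real c"], of y] y by simp
    then have "real c * y \<le> 1" using cdy by linarith
    then have cc: "real c \<le> 1/y" using y by (simp add: field_simps)
    have "real d * y \<le> real c * real d * y"
      using mult_right_mono[OF mult_right_mono[OF c1, of "real d"], of y] y by simp
    then have "real d * y \<le> 1" using cdy by linarith
    then have "real d \<le> 1/y" using y by (simp add: field_simps)
    then show ?thesis using cc y by simp
  qed
  have Bge2: "(1 + 1/y) * (1 + x) = 1 + x + 1/y + x/y" by (simp add: algebra_simps add_divide_distrib)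
  have iy: "1/y > 0" "x/y > 0" using x y by auto
  have b: "real b < real d * x" using PQpos unfolding P_def by simp
  have "real d * x \<le> (1 + 1/y) * x" using mult_right_mono[of "real d" "1 + 1/y" x] cd x by linarith
  also have "(1 + 1/y) * x = x + x/y" by (simp add: algebra_simps)
  finally have "real d * x \<le> x + x/y" .
  then have bb: "real b \<le> (1 + 1/y) * (1 + x)" using b Bge2 iy by linarith
  have "Q \<le> real d * Q" using mult_right_mono[OF d1', of Q] PQpos by simp
  then have Q1: "Q \<le> 1" using dQ by linarith
  have "real c * x \<le> (1/y) * x" using mult_right_mono[of "real c" "1/y" x] cd x by linarith
  then have "real c * x \<le> x / y" by simp
  then have aa: "real a \<le> 1 + x/y" using Q1 unfolding Q_def by linarith
  show ?thesis using aa bb cd Bge2 iy x by linarith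
qed

lemma finite_reps:
  assumes z: "z \<in> D0"
  shows "finite {T \<in> SL2N0. \<exists>w\<in>D0. moeb T w = z}"
proof -
  define B where "B = (1 + 1/Im z) * (1 + Re z)"
  define n where "n = nat \<lceil>B\<rceil>"
  have zz: "Im z > 0" "Re z > 0" using z unfolding D0_def by auto
  have sub: "{T \<in> SL2N0. \<exists>w\<in>D0. moeb T w = z} \<subseteq> {..n} \<times> {..n} \<times> {..n} \<times> {..n}"
  proof
    fix T assume "T \<in> {T \<in> SL2N0. \<exists>w\<in>D0. moeb T w = z}"
    then obtain w where T: "T \<in> SL2N0" "w \<in> D0" "moeb T w = z" by auto
    obtain a b c d where Td: "T = (a,b,c,d)" by (cases T) auto
    have K: "(real d * Re z - real b) * (real a - real c * Re z) > real c * real d * (Im z)\<^sup>2"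
      using key_ineq[OF T(1)[unfolded Td] T(2)] T(3) Td by simp
    have bd: "real a \<le> B \<and> real b \<le> B \<and> real c \<le> B \<and> real d \<le> B"
      using bounds[OF det_nat[OF T(1)[unfolded Td]] zz K] unfolding B_def .
    have le: "k \<le> n" if kB: "real k \<le> B" for k
    proof -
      have "real k \<le> of_int \<lceil>B\<rceil>" using le_of_int_ceiling[of B] kB by linarith
      then have "of_int (int k) \<le> (of_int \<lceil>B\<rceil> :: real)" by simp
      then have "int k \<le> \<lceil>B\<rceil>" by (simp only: of_int_le_iff)
      then show "k \<le> n" unfolding n_def by (simp add: le_nat_iff)
    qed
    show "T \<in> {..n} \<times> {..n} \<times> {..n} \<times> {..n}" unfolding Td using bd le by auto
  qed
  have "finite ({..n} \<times> {..n} \<times> {..n} \<times> {..n})"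
    by (intro finite_cartesian_product finite_atMost)
  then show ?thesis by (rule finite_subset[OF sub])
qed


lemma not_id:
  assumes L: "L \<in> SL2N0" and R: "R \<in> SL2N0" and lr: "left_right_pair L R"
  shows "L \<noteq> (1,0,0,1)" "R \<noteq> (1,0,0,1)"
proof -
  have i: "Complex 1 1 \<in> D0" unfolding D0_def by simp
  have idm: "\<And>w. moeb (1,0,0,1) w = w" unfolding moeb_def by simp
  show "L \<noteq> (1,0,0,1)"
  proof
    assume "L = (1,0,0,1)"
    then have "moeb R (Complex 1 1) \<in> moeb L ` D0" using moeb_D0[OF R i] idm by (metis image_eqI)
    moreover have "moeb R (Complex 1 1) \<in> moeb R ` D0" using i by simp
    ultimately show False using lr unfolding left_right_pair_def by blast
  qed
  show "R \<noteq> (1,0,0,1)"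
  proof
    assume "R = (1,0,0,1)"
    then have "moeb L (Complex 1 1) \<in> moeb R ` D0" using moeb_D0[OF L i] idm by (metis image_eqI)
    moreover have "moeb L (Complex 1 1) \<in> moeb L ` D0" using i by simp
    ultimately show False using lr unfolding left_right_pair_def by blast
  qed
qed

lemma edge_D:
  "(u,v) \<in> Fedges L R \<Longrightarrow> u \<in> D0 \<and> (v = moeb L u \<or> v = moeb R u)"
  unfolding Fedges_def by auto

lemma anc_rep:
  assumes L: "L \<in> SL2N0" and R: "R \<in> SL2N0"
  shows "(w,z) \<in> (Fedges L R)\<^sup>+ \<Longrightarrow> w \<in> D0 \<and> (\<exists>T\<in>SL2N0. moeb T w = z)"
proof (induction rule: trancl_induct)
  case (base y)
  then show ?case using edge_D[OF base] L R by blast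
next
  case (step y z)
  then obtain T where T: "T \<in> SL2N0" "moeb T w = y" and w: "w \<in> D0" by blast
  from edge_D[OF step(2)] obtain S where S: "S \<in> SL2N0" "z = moeb S y" using L R by blast
  have "moeb (mmul S T) w = z" using moeb_mmul[OF S(1) T(1) w] S T by simp
  then show ?case using w mmul_SL[OF S(1) T(1)] by blast
qed

lemma edge_order:
  assumes L: "L \<in> SL2N0" and R: "R \<in> SL2N0" and lr: "left_right_pair L R"
    and e: "(u,v) \<in> Fedges L R"
  shows "Im v < Im u \<or> (Im v = Im u \<and> Re u < Re v)"
  using edge_D[OF e] moeb_step[OF L _ not_id(1)[OF L R lr]] moeb_step[OF R _ not_id(2)[OF L R lr]]
  by blast

theorem theorem1p2:
  assumes "L \<in> SL2N0" and "R \<in> SL2N0" and "left_right_pair L R"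
  shows "(\<forall>z\<in>D0. \<exists>r\<in>D0. same_component L R r z \<and> indegree_zero L R r)
       \<and> (\<forall>z\<in>D0. finite (ancestors L R z))"
proof -
  note L = assms(1) and R = assms(2) and lr = assms(3)
  have fin: "finite (ancestors L R z)" if z: "z \<in> D0" for z
  proof -
    define S where "S = {T \<in> SL2N0. \<exists>w\<in>D0. moeb T w = z}"
    have fS: "finite S" unfolding S_def by (rule finite_reps[OF z])
    have sub: "ancestors L R z \<subseteq> (\<Union>T\<in>S. {w\<in>D0. moeb T w = z})"
      unfolding ancestors_def S_def using anc_rep[OF L R] by blast
    have each: "finite {w\<in>D0. moeb T w = z}" if "T \<in> S" for T
    proof (cases "{w\<in>D0. moeb T w = z} = {}")
      case True show ?thesis unfolding True by (rule finite.emptyI)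
    next
      case False
      then obtain w0 where w0: "w0 \<in> D0" "moeb T w0 = z" by auto
      have TS: "T \<in> SL2N0" using that unfolding S_def by simp
      have "{w\<in>D0. moeb T w = z} \<subseteq> {w0}"
      proof
        fix w assume "w \<in> {w\<in>D0. moeb T w = z}"
        then have "w \<in> D0" "moeb T w = moeb T w0" using w0 by auto
        then have "w = w0" using moeb_inj[OF TS _ w0(1)] by blast
        then show "w \<in> {w0}" by simp
      qed
      then show ?thesis using finite_subset by blast
    qed
    have "finite (\<Union>T\<in>S. {w\<in>D0. moeb T w = z})" using fS each by (rule finite_UN_I)
    then show ?thesis by (rule finite_subset[OF sub])
  qed
  have root: "\<exists>r\<in>D0. same_component L R r z \<and> indegree_zero L R r" if z: "z \<in> D0" for z
  proof -
    define A where "A = insert z (ancestors L R z)"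
    have fA: "finite A" unfolding A_def using fin[OF z] by simp
    have AD: "A \<subseteq> D0" unfolding A_def ancestors_def using z anc_rep[OF L R] by blast
    have Acl: "u \<in> A" if "(u,r) \<in> Fedges L R" "r \<in> A" for u r
    proof -
      have "(r,z) \<in> (Fedges L R)\<^sup>* " using that(2) unfolding A_def ancestors_def by auto
      then have "(u,z) \<in> (Fedges L R)\<^sup>+" using that(1) by (meson rtrancl_into_trancl2)
      then show ?thesis unfolding A_def ancestors_def by simp
    qed
    define m where "m = Max (Im ` A)"
    define A' where "A' = {p\<in>A. Im p = m}"
    have "m \<in> Im ` A" unfolding m_def using fA A_def by (intro Max_in) auto
    then have A'ne: "A' \<noteq> {}" unfolding A'_def by auto
    have fA': "finite A'" unfolding A'_def using fA by simp
    define m2 where "m2 = Min (Re ` A')"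
    have "m2 \<in> Re ` A'" unfolding m2_def using fA' A'ne by (intro Min_in) auto
    then obtain r where r: "r \<in> A'" "Re r = m2" by auto
    have rA: "r \<in> A" and rm: "Im r = m" using r unfolding A'_def by auto
    have indeg: "indegree_zero L R r"
      unfolding indegree_zero_def
    proof
      assume "\<exists>u. (u, r) \<in> Fedges L R"
      then obtain u where u: "(u,r) \<in> Fedges L R" by blast
      have uA: "u \<in> A" by (rule Acl[OF u rA])
      have "Im u \<le> m" unfolding m_def using fA uA by simp
      moreover have ord: "Im r < Im u \<or> (Im r = Im u \<and> Re u < Re r)" by (rule edge_order[OF L R lr u])
      ultimately have "Im u = m" "Re u < Re r" using rm by auto
      then have "u \<in> A'" using uA unfolding A'_def by simp
      then have "m2 \<le> Re u" unfolding m2_def using fA' by simp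
      then show False using \<open>Re u < Re r\<close> r(2) by simp
    qed
    have "(r,z) \<in> (Fedges L R)\<^sup>*" using rA unfolding A_def ancestors_def by auto
    then have "same_component L R r z" unfolding same_component_def
      by (rule rtrancl_mono[THEN subsetD, rotated]) auto
    then show ?thesis using rA AD indeg by blast
  qed
  show ?thesis using fin root by blast
qed

end
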